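(* Let $K=\{k_0,k_1,\dots,k_n\}$ be a finite set of alternatives, $K_*=K\setminus\{k_0\}$, $T_1,T_2$ finite type sets with $\min\{|T_1|,|T_2|\}=2$, $T=T_1\times T_2$, and $\lambda$ a probability measure on $T$ with $\lambda(t)>0$ for all $t$, equal to the product of its marginals $\lambda_1,\lambda_2$. If an interim allocation rule $Q=(Q_1,Q_2)$, $Q_i:K\times T_i\to\mathbb{R}$, is implementable, then for all $G\subseteq K_*$, $E_1\subseteq T_1$ and $E_2\subseteq T_2$, $$\sum_{k\in G}\Big[\sum_{t_1\in E_1}Q_1^k(t_1)\lambda_1(t_1)-\sum_{t_2\in E_2}Q_2^k(t_2)\lambda_2(t_2)\Big]\le \lambda\big(E_1\times (T_2\setminus E_2)\big).$$
   Context: An ex post allocation rule $q:K\times T\to\mathbb{R}$ is feasible if $q\ge 0$ and $\sum_{k\in K}q^k(t)=1$ for all $t\in T$. An interim allocation rule $Q$ is implementable if there exists a feasible $q$ with $Q_i^k(t_i)=\sum_{t_{-i}\in T_{-i}}q^k(t)\lambda_{-i}(t_{-i})$ for all $i\in\{1,2\}$, $t_i\in T_i$, $k\in K$, where $-i$ denotes the other player. For $E\subseteq T$, $\lambda(E)=\sum_{t\in E}\lambda(t)$. *)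

theory Defs
  imports Complex_Main
begin

definition marg1 :: "('t1 \<times> 't2 \<Rightarrow> real) \<Rightarrow> 't2 set \<Rightarrow> 't1 \<Rightarrow> real" where
  "marg1 lam T2 t1 = (\<Sum>t2\<in>T2. lam (t1, t2))"

definition marg2 :: "('t1 \<times> 't2 \<Rightarrow> real) \<Rightarrow> 't1 set \<Rightarrow> 't2 \<Rightarrow> real" where
  "marg2 lam T1 t2 = (\<Sum>t1\<in>T1. lam (t1, t2))"

definition feasible :: "'k set \<Rightarrow> ('t1 \<times> 't2) set \<Rightarrow> ('k \<Rightarrow> 't1 \<times> 't2 \<Rightarrow> real) \<Rightarrow> bool" where
  "feasible K T q \<longleftrightarrow> (\<forall>k\<in>K. \<forall>t\<in>T. q k t \<ge> 0) \<and> (\<forall>t\<in>T. (\<Sum>k\<in>K. q k t) = 1)"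

definition implementable ::
  "'k set \<Rightarrow> 't1 set \<Rightarrow> 't2 set \<Rightarrow> ('t1 \<times> 't2 \<Rightarrow> real) \<Rightarrow>
   ('k \<Rightarrow> 't1 \<Rightarrow> real) \<Rightarrow> ('k \<Rightarrow> 't2 \<Rightarrow> real) \<Rightarrow> bool" where
  "implementable K T1 T2 lam Q1 Q2 \<longleftrightarrow>
     (\<exists>q. feasible K (T1 \<times> T2) q \<and>
        (\<forall>k\<in>K. \<forall>t1\<in>T1. Q1 k t1 = (\<Sum>t2\<in>T2. q k (t1, t2) * marg2 lam T1 t2)) \<and>
        (\<forall>k\<in>K. \<forall>t2\<in>T2. Q2 k t2 = (\<Sum>t1\<in>T1. q k (t1, t2) * marg1 lam T2 t1)))"

end

theory Submission
  imports Defs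
begin

theorem lemma2:
  fixes K :: "'k set" and k0 :: 'k
    and T1 :: "'t1 set" and T2 :: "'t2 set"
    and lam :: "'t1 \<times> 't2 \<Rightarrow> real"
    and Q1 :: "'k \<Rightarrow> 't1 \<Rightarrow> real" and Q2 :: "'k \<Rightarrow> 't2 \<Rightarrow> real"
  assumes "finite K" and "k0 \<in> K"
    and "finite T1" and "finite T2"
    and "min (card T1) (card T2) = 2"
    and "\<forall>t\<in>T1 \<times> T2. lam t > 0"
    and "(\<Sum>t\<in>T1 \<times> T2. lam t) = 1"
    and "\<forall>t1\<in>T1. \<forall>t2\<in>T2. lam (t1, t2) = marg1 lam T2 t1 * marg2 lam T1 t2"
    and "implementable K T1 T2 lam Q1 Q2"
    and "G \<subseteq> K - {k0}" and "E1 \<subseteq> T1" and "E2 \<subseteq> T2"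
  shows "(\<Sum>k\<in>G. (\<Sum>t1\<in>E1. Q1 k t1 * marg1 lam T2 t1) - (\<Sum>t2\<in>E2. Q2 k t2 * marg2 lam T1 t2))
           \<le> (\<Sum>t\<in>E1 \<times> (T2 - E2). lam t)"
proof -
  note A = assms
  obtain q where fq: "feasible K (T1 \<times> T2) q"
    and h1: "\<forall>k\<in>K. \<forall>t1\<in>T1. Q1 k t1 = (\<Sum>t2\<in>T2. q k (t1, t2) * marg2 lam T1 t2)"
    and h2: "\<forall>k\<in>K. \<forall>t2\<in>T2. Q2 k t2 = (\<Sum>t1\<in>T1. q k (t1, t2) * marg1 lam T2 t1)"
    using A(9) unfolding implementable_def by blast
  have qnn: "\<And>k t. k \<in> K \<Longrightarrow> t \<in> T1 \<times> T2 \<Longrightarrow> q k t \<ge> 0"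
    and qs: "\<And>t. t \<in> T1 \<times> T2 \<Longrightarrow> (\<Sum>k\<in>K. q k t) = 1"
    using fq unfolding feasible_def by auto
  define w where "w k t = q k t * lam t" for k t
  have wnn: "\<And>k t. k \<in> K \<Longrightarrow> t \<in> T1 \<times> T2 \<Longrightarrow> w k t \<ge> 0"
    using qnn A(6) unfolding w_def by (meson less_le mult_nonneg_nonneg)
  have GK: "G \<subseteq> K" using A(10) by blast
  have finG: "finite G" using GK A(1) finite_subset by blast
  have finE1: "finite E1" using A(11) A(3) finite_subset by blast
  have finE2: "finite E2" using A(12) A(4) finite_subset by blast
  have e1: "(\<Sum>t1\<in>E1. Q1 k t1 * marg1 lam T2 t1) = (\<Sum>t\<in>E1 \<times> T2. w k t)" if k: "k \<in> K" for k
  proof -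
    have "(\<Sum>t1\<in>E1. Q1 k t1 * marg1 lam T2 t1) = (\<Sum>t1\<in>E1. \<Sum>t2\<in>T2. w k (t1, t2))"
    proof (rule sum.cong[OF refl])
      fix t1 assume t1: "t1 \<in> E1"
      hence t1T: "t1 \<in> T1" using A(11) by blast
      have "Q1 k t1 * marg1 lam T2 t1 = (\<Sum>t2\<in>T2. q k (t1, t2) * marg2 lam T1 t2 * marg1 lam T2 t1)"
        using h1 k t1T by (simp add: sum_distrib_right)
      also have "\<dots> = (\<Sum>t2\<in>T2. w k (t1, t2))"
        by (rule sum.cong[OF refl]) (use A(8) t1T in \<open>simp add: w_def\<close>)
      finally show "Q1 k t1 * marg1 lam T2 t1 = (\<Sum>t2\<in>T2. w k (t1, t2))" .
    qed
    also have "\<dots> = (\<Sum>t\<in>E1 \<times> T2. w k t)"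
      by (simp add: sum.cartesian_product)
    finally show ?thesis .
  qed
  have e2: "(\<Sum>t2\<in>E2. Q2 k t2 * marg2 lam T1 t2) = (\<Sum>t\<in>T1 \<times> E2. w k t)" if k: "k \<in> K" for k
  proof -
    have "(\<Sum>t2\<in>E2. Q2 k t2 * marg2 lam T1 t2) = (\<Sum>t2\<in>E2. \<Sum>t1\<in>T1. w k (t1, t2))"
    proof (rule sum.cong[OF refl])
      fix t2 assume t2: "t2 \<in> E2"
      hence t2T: "t2 \<in> T2" using A(12) by blast
      have "Q2 k t2 * marg2 lam T1 t2 = (\<Sum>t1\<in>T1. q k (t1, t2) * marg1 lam T2 t1 * marg2 lam T1 t2)"
        using h2 k t2T by (simp add: sum_distrib_right)
      also have "\<dots> = (\<Sum>t1\<in>T1. w k (t1, t2))"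
        by (rule sum.cong[OF refl]) (use A(8) t2T in \<open>simp add: w_def\<close>)
      finally show "Q2 k t2 * marg2 lam T1 t2 = (\<Sum>t1\<in>T1. w k (t1, t2))" .
    qed
    also have "\<dots> = (\<Sum>t1\<in>T1. \<Sum>t2\<in>E2. w k (t1, t2))"
      by (rule sum.swap)
    also have "\<dots> = (\<Sum>t\<in>T1 \<times> E2. w k t)"
      by (simp add: sum.cartesian_product)
    finally show ?thesis .
  qed
  have e3: "(\<Sum>t\<in>E1 \<times> T2. w k t) - (\<Sum>t\<in>T1 \<times> E2. w k t) \<le> (\<Sum>t\<in>E1 \<times> (T2 - E2). w k t)"
    if k: "k \<in> K" for k
  proof -
    have split: "E1 \<times> T2 = E1 \<times> (T2 - E2) \<union> E1 \<times> E2" using A(12) by blast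
    have "(\<Sum>t\<in>E1 \<times> T2. w k t) = (\<Sum>t\<in>E1 \<times> (T2 - E2). w k t) + (\<Sum>t\<in>E1 \<times> E2. w k t)"
      unfolding split by (rule sum.union_disjoint) (use finE1 finE2 A(4) in auto)
    moreover have "(\<Sum>t\<in>E1 \<times> E2. w k t) \<le> (\<Sum>t\<in>T1 \<times> E2. w k t)"
      by (rule sum_mono2) (use finE2 A(3) A(11) A(12) wnn k in auto)
    ultimately show ?thesis by linarith
  qed
  have "(\<Sum>k\<in>G. (\<Sum>t1\<in>E1. Q1 k t1 * marg1 lam T2 t1) - (\<Sum>t2\<in>E2. Q2 k t2 * marg2 lam T1 t2))
        \<le> (\<Sum>k\<in>G. \<Sum>t\<in>E1 \<times> (T2 - E2). w k t)"
    by (rule sum_mono) (use e1 e2 e3 GK in auto)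
  also have "\<dots> = (\<Sum>t\<in>E1 \<times> (T2 - E2). lam t * (\<Sum>k\<in>G. q k t))"
    by (subst sum.swap) (simp add: w_def sum_distrib_left mult.commute)
  also have "\<dots> \<le> (\<Sum>t\<in>E1 \<times> (T2 - E2). lam t)"
  proof (rule sum_mono)
    fix t assume t: "t \<in> E1 \<times> (T2 - E2)"
    hence tT: "t \<in> T1 \<times> T2" using A(11) by blast
    have "(\<Sum>k\<in>G. q k t) \<le> (\<Sum>k\<in>K. q k t)"
      by (rule sum_mono2) (use A(1) GK qnn tT in auto)
    hence "(\<Sum>k\<in>G. q k t) \<le> 1" using qs tT by simp
    moreover have "lam t > 0" using A(6) tT by blast
    ultimately show "lam t * (\<Sum>k\<in>G. q k t) \<le> lam t"
      by (simp add: mult_left_le)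
  qed
  finally show ?thesis .
qed

end
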